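(* Let $y$ be a point of the upper half-plane $\mathfrak h_1$ such that $\tau(y)=\gamma y$ for some $\gamma\in\Gamma(2)$, where $\tau(y)=-\overline y$. Then there exist $\beta\in SL(2,\mathbb Z)$ and $Y>0$ such that $y=\beta\cdot iY$.
   Context: $SL(2,\mathbb R)$ acts on $\mathfrak h_1=\{z\in\mathbb C:\mathrm{Im}z>0\}$ by fractional linear transformations. $\Gamma(2)=\{\gamma\in SL(2,\mathbb Z):\gamma\equiv I\bmod2\}$. *)

theory Defs
  imports Complex_Main
begin

text \<open>A 2x2 integer matrix (a b; c d) is represented as the tuple (a, b, c, d).\<close>

definition SL2Z :: "(int \<times> int \<times> int \<times> int) set" where
  "SL2Z = {(a, b, c, d). a * d - b * c = 1}"

definition Gamma2 :: "(int \<times> int \<times> int \<times> int) set" where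
  "Gamma2 = {(a, b, c, d). (a, b, c, d) \<in> SL2Z \<and> a mod 2 = 1 \<and> b mod 2 = 0
                          \<and> c mod 2 = 0 \<and> d mod 2 = 1}"

definition moebius :: "int \<times> int \<times> int \<times> int \<Rightarrow> complex \<Rightarrow> complex" where
  "moebius M z = (case M of (a, b, c, d) \<Rightarrow>
     (of_int a * z + of_int b) / (of_int c * z + of_int d))"

definition upper_half_plane :: "complex set" where
  "upper_half_plane = {z. Im z > 0}"

definition tau :: "complex \<Rightarrow> complex" where
  "tau y = - cnj y"

end

theory Submission
  imports Defs "HOL-Computational_Algebra.Primes"
begin

lemma key:
  fixes y :: complex and g k c1 m1 :: int
  assumes t: "Im y > 0" and det: "g * m1 - k * c1 = 1" and c1: "c1 \<noteq> 0"
    and re: "real_of_int (g*c1) * (Re y ^ 2 + Im y ^ 2) + real_of_int (g*m1 + k*c1) * Re y + real_of_int (k*m1) = 0"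
  shows "\<exists>\<beta>\<in>SL2Z. \<exists>Y::real. Y > 0 \<and> y = moebius \<beta> (\<i> * complex_of_real Y)"
proof -
  define D where "D = of_int c1 * y + of_int m1"
  have D0: "D \<noteq> 0"
  proof
    assume "D = 0"
    hence "Im D = 0" by simp
    hence "of_int c1 * Im y = 0" unfolding D_def by simp
    with t c1 show False by simp
  qed
  define N where "N = (of_int g * y + of_int k) * cnj D"
  have ReN: "Re N = 0"
    using re unfolding N_def D_def by (simp add: algebra_simps power2_eq_square)
  have ImN: "Im N = Im y"
  proof -
    have "Im N = real_of_int (g * m1 - k * c1) * Im y"
      unfolding N_def D_def by (simp add: algebra_simps)
    thus ?thesis using det by simp
  qed
  define w where "w = N / of_real ((cmod D)^2)"
  have nD: "(cmod D)^2 > 0" using D0 by simp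
  have w_alt: "w = (of_int g * y + of_int k) / D"
  proof -
    have "D * cnj D = of_real ((cmod D)^2)" using complex_norm_square[of D] by simp
    thus ?thesis unfolding w_def N_def using D0
      by (metis (no_types, lifting) mult.commute nonzero_mult_divide_mult_cancel_left2 complex_cnj_zero_iff)
  qed
  define Y where "Y = Im y / (cmod D)^2"
  have Y0: "Y > 0" unfolding Y_def using t nD by simp
  have wY: "w = \<i> * complex_of_real Y"
    unfolding w_def Y_def using ReN ImN nD
    by (simp add: complex_eq_iff)
  have "moebius (m1, -k, -c1, g) w = y"
  proof -
    have e1: "of_int m1 * w + of_int (-k) = y / D"
      unfolding w_alt using D0 det
      by (simp add: field_simps D_def) (simp add: algebra_simps flip: of_int_mult of_int_diff)
    have e2: "of_int (-c1) * w + of_int g = 1 / D"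
      unfolding w_alt using D0 det
      by (simp add: field_simps D_def) (simp add: algebra_simps flip: of_int_mult of_int_diff)
    show ?thesis unfolding moebius_def using e1 e2 D0 by simp
  qed
  moreover have "(m1, -k, -c1, g) \<in> SL2Z" unfolding SL2Z_def using det by (simp add: algebra_simps)
  ultimately show ?thesis using Y0 wY by metis
qed

theorem lemma5p3:
  fixes y :: complex
  assumes "y \<in> upper_half_plane"
    and "\<exists>\<gamma>\<in>Gamma2. tau y = moebius \<gamma> y"
  shows "\<exists>\<beta>\<in>SL2Z. \<exists>Y::real. Y > 0 \<and> y = moebius \<beta> (\<i> * complex_of_real Y)"
proof -
  have t: "Im y > 0" using assms(1) unfolding upper_half_plane_def by simp
  obtain a b c d where G: "(a,b,c,d) \<in> Gamma2" and eq: "tau y = moebius (a,b,c,d) y"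
    using assms(2) by auto
  have det: "a*d - b*c = 1" and pa: "a mod 2 = 1" and pb: "b mod 2 = 0" and pc: "c mod 2 = 0"
    using G unfolding Gamma2_def SL2Z_def by auto
  define x where "x = Re y"
  define t where "t = Im y"
  have t0: "t > 0" using t t_def by simp
  have yxt: "y = Complex x t" unfolding x_def t_def by simp
  define E where "E = of_int c * y + of_int d"
  have E0: "E \<noteq> 0"
  proof
    assume "E = 0"
    hence "tau y = 0" using eq unfolding moebius_def E_def by simp
    hence "y = 0" unfolding tau_def by simp
    with t show False by simp
  qed
  have eq2: "tau y * E = of_int a * y + of_int b"
    using eq E0 unfolding moebius_def E_def by (simp add: field_simps)
  have imeq: "t * (of_int d - of_int a) = 0"
    using arg_cong[OF eq2, of Im] unfolding tau_def E_def yxt by (simp add: algebra_simps)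
  hence ad: "a = d" using t0 by simp
  have reeq: "of_int c * (x^2 + t^2) + 2 * of_int a * x + of_int b = 0"
    using arg_cong[OF eq2, of Re] ad unfolding tau_def E_def yxt
    by (simp add: algebra_simps power2_eq_square)
  obtain b' where b': "b = 2*b'" using pb by (metis dvd_def mod_0_imp_dvd)
  obtain c' where c': "c = 2*c'" using pc by (metis dvd_def mod_0_imp_dvd)
  obtain m where m: "a + 1 = 2*m" proof -
    have "(a+1) mod 2 = 0" using pa by presburger
    thus ?thesis using that by (metis dvd_def mod_0_imp_dvd)
  qed
  show ?thesis
  proof (cases "c' = 0")
    case True
    have "a*a = 1" using det ad True c' by simp
    hence a1: "a = 1 \<or> a = -1" using zmult_eq_1_iff by blast
    have "2 * of_int a * x + of_int b = (0::real)" using reeq True c' by simp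
    hence xb: "x = - of_int (a*b')" using a1 b' by auto
    have "y = moebius (1, -(a*b'), 0, 1) (\<i> * complex_of_real t)"
      unfolding moebius_def yxt xb by (simp add: complex_eq_iff)
    moreover have "(1, -(a*b'), 0, 1) \<in> SL2Z" unfolding SL2Z_def by simp
    ultimately show ?thesis using t0 by blast
  next
    case False
    have mm: "m*(m-1) = b'*c'"
    proof -
      have "(2*m-1)*(2*m-1) - (2*b')*(2*c') = 1" using det ad b' c' m by (metis add_diff_cancel_right')
      thus ?thesis by algebra
    qed
    define g where "g = gcd m c'"
    have g0: "g \<noteq> 0" using False g_def by simp
    obtain m1 where m1: "m = g*m1" unfolding g_def by (meson dvd_def gcd_dvd1)
    obtain c1 where c1: "c' = g*c1" unfolding g_def by (meson dvd_def gcd_dvd2)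
    have gp: "g > 0" using g0 unfolding g_def by simp
    have cop: "coprime m1 c1"
    proof -
      have "g = gcd m c'" by (simp add: g_def)
      also have "\<dots> = gcd (g*m1) (g*c1)" by (simp only: m1 c1)
      also have "\<dots> = g * gcd m1 c1" using gp by (simp only: gcd_mult_left normalize_mult) (simp add: abs_of_pos)
      finally have "gcd m1 c1 = 1" using gp by simp
      thus ?thesis by (simp add: coprime_iff_gcd_eq_1)
    qed
    have mb: "m1*(m-1) = b'*c1"
    proof -
      have "g*(m1*(m-1)) = g*(b'*c1)" using mm m1 c1 by (simp add: algebra_simps)
      thus ?thesis using g0 by simp
    qed
    have "c1 dvd m1*(m-1)" using mb by simp
    hence "c1 dvd (m-1)" using cop by (metis coprime_commute coprime_dvd_mult_right_iff coprime_dvd_mult_left_iff)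
    then obtain k where k: "m - 1 = c1*k" by (auto simp: dvd_def)
    have c10: "c1 \<noteq> 0" using False c1 by simp
    have km: "k*m1 = b'"
    proof -
      have "c1*(k*m1) = c1*b'" using mb k by (simp add: algebra_simps)
      thus ?thesis using c10 by simp
    qed
    have det1: "g*m1 - k*c1 = 1" using m1 k by (simp add: algebra_simps)
    have "real_of_int (g*c1) * (Re y ^ 2 + Im y ^ 2) + real_of_int (g*m1 + k*c1) * Re y + real_of_int (k*m1) = 0"
    proof -
      have "g*c1 = c'" "g*m1 + k*c1 = a" "k*m1 = b'" using c1 m1 k m km by (auto simp: algebra_simps)
      moreover have "of_int c' * (x^2 + t^2) + of_int a * x + of_int b' = (0::real)"
        using reeq b' c' by (simp add: algebra_simps)
      ultimately show ?thesis unfolding x_def t_def by simp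
    qed
    from key[OF t det1 c10 this] show ?thesis .
  qed
qed

end
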